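(* Let $\mathcal{C}$ be a class of $\Sigma$-algebras, let $X \subseteq \dot\Sigma$ be a finite set, and let $<$ be a well-founded binary relation on $X^*$ such that (i) $<$ is compatible with concatenation ($w < w'$ implies $u w v < u w' v$ for all $u,v\in X^*$), and (ii) $<$ has no infinite antichains. Then the following are equivalent: (1) there is a finite set $\{(u_i, w_i) \mid i \in I\}$ of pairs of words in $X^*$ with $u_i < w_i$ and $u_i\ \dot\sim_{\mathcal{C}}\ w_i$ for all $i$, such that the language $X^*\big(\bigcup_{i\in I} w_i\big)X^*$ over the alphabet $X$ is cofinite (its complement in $X^*$ is finite); (2) $X^*/{\dot\sim_{\mathcal{C}}}$ is finite.
   Context: $\Sigma$ is a finite algebraic signature and $V$ a non-empty finite set of variables; $\Sigma$-terms over $V$, and $\Sigma$-algebras have non-empty finite universes; $t \sim_{\mathcal{C}} s$ iff $t,s$ evaluate equally under all valuations in all algebras in $\mathcal{C}$. $\mathrm{vo}(t)$ is the number of variable occurrences in $t$. $\dot\Sigma$ is the set of characters $f(t_1,\dots,t_{i-1},\_,t_{i+1},\dots,t_n)$ where $f\in\Sigma$ is $n$-ary, $i\in\{1,\dots,n\}$, and each $t_j$ ($j\ne i$) has $\mathrm{vo}(t_j)=0$. For a word $w\in\dot\Sigma^*$, $w[t]$ is defined by $\varepsilon[t]=t$ and $(f(t_1,\dots,\_,\dots,t_n)\,w')[t] = f(t_1,\dots,t_{i-1},w'[t],t_{i+1},\dots,t_n)$. $w\ \dot\sim_{\mathcal{C}}\ w'$ iff $w[a]\sim_{\mathcal{C}}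 w'[a]$ for any variable $a\in V$. *)

theory Defs
  imports Main
begin

datatype ('f, 'v) trm = Var 'v | Fun 'f "('f, 'v) trm list"

fun wf_trm :: "'f set \<Rightarrow> ('f \<Rightarrow> nat) \<Rightarrow> 'v set \<Rightarrow> ('f, 'v) trm \<Rightarrow> bool" where
  "wf_trm Sig ar V (Var x) = (x \<in> V)"
| "wf_trm Sig ar V (Fun f ts) = (f \<in> Sig \<and> length ts = ar f \<and> (\<forall>t\<in>set ts. wf_trm Sig ar V t))"

fun vo :: "('f, 'v) trm \<Rightarrow> nat" where
  "vo (Var x) = 1"
| "vo (Fun f ts) = sum_list (map vo ts)"

type_synonym ('f, 'a) alg = "'a set \<times> ('f \<Rightarrow> 'a list \<Rightarrow> 'a)"

definition is_algebra :: "'f set \<Rightarrow> ('f \<Rightarrow> nat) \<Rightarrow> ('f, 'a) alg \<Rightarrow> bool" where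
  "is_algebra Sig ar A \<longleftrightarrow> finite (fst A) \<and> fst A \<noteq> {} \<and>
     (\<forall>f\<in>Sig. \<forall>xs. length xs = ar f \<longrightarrow> set xs \<subseteq> fst A \<longrightarrow> snd A f xs \<in> fst A)"

fun eval :: "('f \<Rightarrow> 'a list \<Rightarrow> 'a) \<Rightarrow> ('v \<Rightarrow> 'a) \<Rightarrow> ('f, 'v) trm \<Rightarrow> 'a" where
  "eval I \<alpha> (Var x) = \<alpha> x"
| "eval I \<alpha> (Fun f ts) = I f (map (eval I \<alpha>) ts)"

definition term_equiv :: "'v set \<Rightarrow> ('f, 'a) alg set \<Rightarrow> ('f, 'v) trm \<Rightarrow> ('f, 'v) trm \<Rightarrow> bool" where
  "term_equiv V C t s \<longleftrightarrow>
     (\<forall>A\<in>C. \<forall>\<alpha>. (\<forall>x\<in>V. \<alpha> x \<in> fst A) \<longrightarrow> eval (snd A) \<alpha> t = eval (snd A) \<alpha> s)"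

text \<open>Ctx f l r stands for f(l_1,...,l_{i-1}, _, r_1, ...), the hole at position i = length l + 1.\<close>
datatype ('f, 'v) chr = Ctx 'f "('f, 'v) trm list" "('f, 'v) trm list"

definition chars :: "'f set \<Rightarrow> ('f \<Rightarrow> nat) \<Rightarrow> 'v set \<Rightarrow> ('f, 'v) chr set" where
  "chars Sig ar V = {Ctx f l r | f l r. f \<in> Sig \<and> ar f = length l + 1 + length r \<and>
      (\<forall>t\<in>set l \<union> set r. wf_trm Sig ar V t \<and> vo t = 0)}"

fun plug :: "('f, 'v) chr list \<Rightarrow> ('f, 'v) trm \<Rightarrow> ('f, 'v) trm" where
  "plug [] t = t"
| "plug (Ctx f l r # w) t = Fun f (l @ [plug w t] @ r)"

definition word_equiv :: "'v set \<Rightarrow> ('f, 'a) alg set \<Rightarrow> ('f, 'v) chr list \<Rightarrow> ('f, 'v) chr list \<Rightarrow> bool" where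
  "word_equiv V C w w' \<longleftrightarrow> (\<forall>a\<in>V. term_equiv V C (plug w (Var a)) (plug w' (Var a)))"

end

theory Submission
  imports Defs
begin

lemma plug_append: "plug (x @ y) t = plug x (plug y t)"
proof (induction x)
  case Nil then show ?case by simp
next
  case (Cons c x) then show ?case by (cases c) auto
qed

lemma plug_left: "eval I \<alpha> s = eval I \<alpha> s' \<Longrightarrow> eval I \<alpha> (plug x s) = eval I \<alpha> (plug x s')"
proof (induction x)
  case Nil then show ?case by simp
next
  case (Cons c x) then show ?case by (cases c) auto
qed

lemma vo0_eval: "vo t = 0 \<Longrightarrow> eval I \<alpha> t = eval I \<beta> t"
proof (induction t)
  case (Var x) then show ?case by simp
next
  case (Fun f ts)
  then have "\<forall>s\<in>set ts. vo s = 0" by (simp add: sum_list_eq_0_iff)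
  with Fun show ?case by (simp cong: map_cong)
qed

lemma plug_eval:
  assumes "set w \<subseteq> chars Sig ar V"
  shows "eval I \<alpha> (plug w t) = eval I (\<alpha>(a := eval I \<alpha> t)) (plug w (Var a))"
  using assms
proof (induction w)
  case Nil then show ?case by simp
next
  case (Cons c w)
  obtain f l r where c: "c = Ctx f l r" by (cases c)
  with Cons have vl: "\<forall>s\<in>set l \<union> set r. vo s = 0" by (auto simp: chars_def)
  have ml: "map (eval I \<alpha>) l = map (eval I (\<alpha>(a := eval I \<alpha> t))) l"
    using vl by (auto intro!: map_cong vo0_eval)
  have mr: "map (eval I \<alpha>) r = map (eval I (\<alpha>(a := eval I \<alpha> t))) r"
    using vl by (auto intro!: map_cong vo0_eval)
  have IH: "eval I \<alpha> (plug w t) = eval I (\<alpha>(a := eval I \<alpha> t)) (plug w (Var a))"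
    by (rule Cons.IH) (use Cons.prems in simp)
  show ?case unfolding c plug.simps eval.simps map_append list.map ml mr IH ..
qed

lemma wf_eval:
  assumes "is_algebra Sig ar A" "\<forall>x\<in>V. \<alpha> x \<in> fst A"
  shows "wf_trm Sig ar V t \<Longrightarrow> eval (snd A) \<alpha> t \<in> fst A"
proof (induction t)
  case (Var x) then show ?case using assms by simp
next
  case (Fun f ts)
  then have "set (map (eval (snd A) \<alpha>) ts) \<subseteq> fst A" by auto
  with Fun assms(1) show ?case by (auto simp: is_algebra_def)
qed

lemma wf_plug:
  assumes "set y \<subseteq> chars Sig ar V" "a \<in> V"
  shows "wf_trm Sig ar V (plug y (Var a))"
  using assms
proof (induction y)
  case Nil then show ?case by simp
next
  case (Cons c y)
  obtain f l r where c: "c = Ctx f l r" by (cases c)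
  with Cons show ?case by (auto simp: chars_def)
qed

lemma weq_sym: "word_equiv V C u w \<Longrightarrow> word_equiv V C w u"
  unfolding word_equiv_def term_equiv_def by metis

lemma weq_trans: "word_equiv V C u w \<Longrightarrow> word_equiv V C w z \<Longrightarrow> word_equiv V C u z"
  unfolding word_equiv_def term_equiv_def by metis

lemma weq_refl: "word_equiv V C u u"
  unfolding word_equiv_def term_equiv_def by metis

lemma weq_cong:
  assumes alg: "\<forall>A\<in>C. is_algebra Sig ar A" and X: "X \<subseteq> chars Sig ar V"
    and x: "x \<in> lists X" and y: "y \<in> lists X" and u: "u \<in> lists X" and w: "w \<in> lists X"
    and e: "word_equiv V C u w"
  shows "word_equiv V C (x @ u @ y) (x @ w @ y)"
  unfolding word_equiv_def term_equiv_def
proof (intro ballI allI impI)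
  fix a A \<alpha> assume a: "a \<in> V" and A: "A \<in> C" and al: "\<forall>x\<in>V. \<alpha> x \<in> fst A"
  define t where "t = plug y (Var a)"
  have sy: "set y \<subseteq> chars Sig ar V" using y X by auto
  have su: "set u \<subseteq> chars Sig ar V" using u X by auto
  have sw: "set w \<subseteq> chars Sig ar V" using w X by auto
  have v: "eval (snd A) \<alpha> t \<in> fst A"
    unfolding t_def using wf_eval[OF alg[rule_format, OF A] al] wf_plug[OF sy a] by blast
  define \<beta> where "\<beta> = \<alpha>(a := eval (snd A) \<alpha> t)"
  have bl: "\<forall>x\<in>V. \<beta> x \<in> fst A" using al v by (auto simp: \<beta>_def)
  have "eval (snd A) \<beta> (plug u (Var a)) = eval (snd A) \<beta> (plug w (Var a))"
    using e a A bl unfolding word_equiv_def term_equiv_def by blast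
  then have "eval (snd A) \<alpha> (plug u t) = eval (snd A) \<alpha> (plug w t)"
    using plug_eval[OF su] plug_eval[OF sw] unfolding \<beta>_def by metis
  then have "eval (snd A) \<alpha> (plug x (plug u t)) = eval (snd A) \<alpha> (plug x (plug w t))"
    by (rule plug_left)
  then show "eval (snd A) \<alpha> (plug (x @ u @ y) (Var a)) = eval (snd A) \<alpha> (plug (x @ w @ y) (Var a))"
    by (simp add: plug_append t_def)
qed

theorem lemma2p15:
  fixes Sig :: "'f set" and ar :: "'f \<Rightarrow> nat" and V :: "'v set"
    and C :: "('f, 'a) alg set" and X :: "('f, 'v) chr set"
    and R :: "(('f, 'v) chr list \<times> ('f, 'v) chr list) set"
  assumes "finite Sig" and "finite V" and "V \<noteq> {}"
    and "\<forall>A\<in>C. is_algebra Sig ar A"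
    and "X \<subseteq> chars Sig ar V" and "finite X"
    and "R \<subseteq> lists X \<times> lists X" and "wf R"
    and "\<forall>w w' u v. (w, w') \<in> R \<longrightarrow> u \<in> lists X \<longrightarrow> v \<in> lists X \<longrightarrow> (u @ w @ v, u @ w' @ v) \<in> R"
    and "\<forall>S. S \<subseteq> lists X \<longrightarrow> (\<forall>x\<in>S. \<forall>y\<in>S. x \<noteq> y \<longrightarrow> (x, y) \<notin> R \<and> (y, x) \<notin> R) \<longrightarrow> finite S"
  shows "(\<exists>P. finite P \<and> (\<forall>(u, w)\<in>P. (u, w) \<in> R \<and> word_equiv V C u w) \<and>
            finite (lists X - {x @ w @ y | x w y. x \<in> lists X \<and> y \<in> lists X \<and> w \<in> snd ` P}))
         \<longleftrightarrow> finite (lists X // {(w, w'). w \<in> lists X \<and> w' \<in> lists X \<and> word_equiv V C w w'})"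
  (is "?A \<longleftrightarrow> finite (lists X // ?E)")
proof
  assume ?A
  then obtain P where fP: "finite P" and P: "\<forall>(u, w)\<in>P. (u, w) \<in> R \<and> word_equiv V C u w"
    and fF: "finite (lists X - {x @ w @ y | x w y. x \<in> lists X \<and> y \<in> lists X \<and> w \<in> snd ` P})"
    by blast
  define F where "F = lists X - {x @ w @ y | x w y. x \<in> lists X \<and> y \<in> lists X \<and> w \<in> snd ` P}"
  have key: "w \<in> lists X \<longrightarrow> (\<exists>f\<in>F. word_equiv V C w f)" for w
    using assms(8)
  proof (induction w rule: wf_induct_rule)
    case (less w)
    show ?case
    proof
      assume wX: "w \<in> lists X"
      show "\<exists>f\<in>F. word_equiv V C w f"
      proof (cases "w \<in> F")
        case True then show ?thesis using weq_refl by blast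
      next
        case False
        then obtain x wi y where w: "w = x @ wi @ y" and x: "x \<in> lists X" and y: "y \<in> lists X"
          and wi: "wi \<in> snd ` P" using wX unfolding F_def by blast
        then obtain ui where uwP: "(ui, wi) \<in> P" by force
        with P have uwR: "(ui, wi) \<in> R" and e: "word_equiv V C ui wi" by auto
        with assms(7) have ui: "ui \<in> lists X" and wiX: "wi \<in> lists X" by auto
        have R2: "(x @ ui @ y, w) \<in> R" using assms(9) uwR x y w by blast
        have "x @ ui @ y \<in> lists X" using x y ui by auto
        with less R2 obtain f where "f \<in> F" "word_equiv V C (x @ ui @ y) f" by blast
        moreover have "word_equiv V C (x @ ui @ y) w"
          using weq_cong[OF assms(4) assms(5) x y ui wiX e] w by simp
        ultimately show ?thesis using weq_sym weq_trans by blast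
      qed
    qed
  qed
  have "lists X // ?E \<subseteq> (\<lambda>f. ?E `` {f}) ` F"
  proof
    fix c assume "c \<in> lists X // ?E"
    then obtain w where w: "w \<in> lists X" and c: "c = ?E `` {w}" unfolding quotient_def by blast
    then obtain f where f: "f \<in> F" "word_equiv V C w f" using key by blast
    have fX: "f \<in> lists X" using f(1) unfolding F_def by blast
    have fw: "word_equiv V C f w" by (rule weq_sym[OF f(2)])
    have "?E `` {w} = ?E `` {f}"
      using f(2) fw w fX weq_trans[of V C w f] weq_trans[of V C f w] by auto
    then show "c \<in> (\<lambda>f. ?E `` {f}) ` F" using c f(1) by blast
  qed
  moreover have "finite F" using fF F_def by simp
  ultimately show "finite (lists X // ?E)" by (meson finite_imageI finite_subset)
next
  assume fQ: "finite (lists X // ?E)"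
  define M where "M = {w \<in> lists X. \<not> (\<exists>u. (u, w) \<in> R \<and> word_equiv V C u w)}"
  have M_sub: "M \<subseteq> (\<Union>c\<in>lists X // ?E. c \<inter> M)"
  proof
    fix w assume "w \<in> M"
    then have "w \<in> lists X" "w \<in> ?E `` {w}" using weq_refl by (auto simp: M_def)
    then show "w \<in> (\<Union>c\<in>lists X // ?E. c \<inter> M)" using \<open>w \<in> M\<close> unfolding quotient_def by blast
  qed
  have "finite (c \<inter> M)" if cQ: "c \<in> lists X // ?E" for c
  proof -
    obtain w where c: "c = ?E `` {w}" using cQ by (rule quotientE)
    have "\<forall>x\<in>c \<inter> M. \<forall>y\<in>c \<inter> M. x \<noteq> y \<longrightarrow> (x, y) \<notin> R \<and> (y, x) \<notin> R"
    proof (intro ballI impI)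
      fix x y assume x: "x \<in> c \<inter> M" and y: "y \<in> c \<inter> M" and "x \<noteq> y"
      have wx: "word_equiv V C w x" using x c by simp
      have wy: "word_equiv V C w y" using y c by simp
      have "word_equiv V C x y" by (rule weq_trans[OF weq_sym[OF wx] wy])
      moreover have "word_equiv V C y x" by (rule weq_trans[OF weq_sym[OF wy] wx])
      ultimately have "word_equiv V C x y" "word_equiv V C y x" by auto
      then show "(x, y) \<notin> R \<and> (y, x) \<notin> R" using x y unfolding M_def by blast
    qed
    moreover have "c \<inter> M \<subseteq> lists X" unfolding M_def by blast
    ultimately show ?thesis using assms(10)[rule_format, of "c \<inter> M"] by blast
  qed
  then have "finite (\<Union>c\<in>lists X // ?E. c \<inter> M)" using fQ by (intro finite_UN_I)
  then have fM: "finite M" using M_sub by (rule finite_subset[rotated])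
  from finite_imageI[OF fM, of length] obtain K where K0: "\<forall>n\<in>length ` M. n \<le> K"
    unfolding finite_nat_set_iff_bounded_le by blast
  then have K: "\<forall>w\<in>M. length w \<le> K" by simp
  define N0 where "N0 = {w \<in> lists X - M. length w \<le> Suc K}"
  define P where "P = (\<lambda>w. (SOME u. (u, w) \<in> R \<and> word_equiv V C u w, w)) ` N0"
  have fN0: "finite N0"
  proof -
    have "N0 \<subseteq> {xs. set xs \<subseteq> X \<and> length xs \<le> Suc K}" unfolding N0_def by auto
    then show ?thesis using finite_lists_length_le[OF assms(6)] finite_subset by blast
  qed
  have "finite P" unfolding P_def using fN0 by simp
  moreover have "\<forall>(u, w)\<in>P. (u, w) \<in> R \<and> word_equiv V C u w"
  proof
    fix p assume "p \<in> P"
    then obtain w where w: "w \<in> N0" and p: "p = (SOME u. (u, w) \<in> R \<and> word_equiv V C u w, w)"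
      unfolding P_def by blast
    then have "\<exists>u. (u, w) \<in> R \<and> word_equiv V C u w" unfolding N0_def M_def by blast
    then have "(SOME u. (u, w) \<in> R \<and> word_equiv V C u w, w) \<in> R \<and>
       word_equiv V C (SOME u. (u, w) \<in> R \<and> word_equiv V C u w) w"
      by (rule someI_ex)
    then show "case p of (u, w) \<Rightarrow> (u, w) \<in> R \<and> word_equiv V C u w" using p by simp
  qed
  moreover have sndP: "snd ` P = N0" unfolding P_def by force
  have "lists X - {x @ w @ y | x w y. x \<in> lists X \<and> y \<in> lists X \<and> w \<in> snd ` P} \<subseteq> M"
  proof
    fix w assume w: "w \<in> lists X - {x @ w @ y | x w y. x \<in> lists X \<and> y \<in> lists X \<and> w \<in> snd ` P}"
    show "w \<in> M"
    proof (rule ccontr)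
      assume nM: "w \<notin> M"
      show False
      proof (cases "length w \<le> Suc K")
        case True
        then have "w \<in> N0" using w nM unfolding N0_def by blast
        then have "w = [] @ w @ []" "w \<in> snd ` P" using sndP by auto
        then show False using w by blast
      next
        case False
        define p where "p = take (Suc K) w"
        have pl: "length p = Suc K" using False unfolding p_def by simp
        have pX: "p \<in> lists X" "drop (Suc K) w \<in> lists X" using w unfolding p_def
          by (auto dest: in_set_takeD in_set_dropD)
        have "p \<notin> M" using K pl by fastforce
        then have "p \<in> N0" using pX pl unfolding N0_def by simp
        moreover have "w = [] @ p @ drop (Suc K) w" unfolding p_def by simp
        ultimately show False using w pX sndP by blast
      qed
    qed
  qed
  then have "finite (lists X - {x @ w @ y | x w y. x \<in> lists X \<and> y \<in> lists X \<and> w \<in> snd ` P})"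
    using fM finite_subset by blast
  ultimately show ?A by blast
qed

end
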